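(* Let $\theta>1$ be real and $n$ a positive integer. Then $n\in\mathcal A_\theta$ if and only if both \[\left\{\frac{2n}{\log\theta}\right\}\geq 1-2f\!\left(\frac{\log\theta}{n}\right)\quad\text{and}\quad \left\{\frac{n}{\log\theta}\right\}<1-f\!\left(\frac{\log\theta}{n}\right).\]
   Context: $\lfloor x\rfloor$ is the floor and $\{x\}=x-\lfloor x\rfloor$ the fractional part; $\log$ is the natural logarithm. $M'_\theta(n)=\left\lfloor 1/(\theta^{1/n}-1)\right\rfloor$ and $\mathcal A_\theta=\{n\in\mathbb N: M'_\theta(n)\neq \lfloor n/\log\theta-1/2\rfloor\}$. For $t>0$, $f(t)=\frac{1}{e^t-1}-\frac1t+\frac12$. *)

theory Defs
  imports Complex_Main
begin

definition Mprime :: "real \<Rightarrow> nat \<Rightarrow> int" where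
  "Mprime \<theta> n = \<lfloor>1 / (\<theta> powr (1 / real n) - 1)\<rfloor>"

definition A_set :: "real \<Rightarrow> nat set" where
  "A_set \<theta> = {n. n \<ge> 1 \<and> Mprime \<theta> n \<noteq> \<lfloor>real n / ln \<theta> - 1/2\<rfloor>}"

definition f_fun :: "real \<Rightarrow> real" where
  "f_fun t = 1 / (exp t - 1) - 1 / t + 1/2"

end

theory Submission
  imports Defs
begin

lemma exp_strict: "t \<noteq> 0 \<Longrightarrow> 1 + t < exp (t::real)"
  using exp_minus_greater[of "-t"] by simp

lemma h_neg:
  fixes t :: real assumes "t > 0"
  shows "(2 - t) * exp t - 2 - t < 0"
proof -
  let ?h = "\<lambda>s::real. (2 - s) * exp s - 2 - s"
  have "?h 0 > ?h t"
  proof (rule DERIV_neg_imp_decreasing_open[OF assms])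
    fix x :: real assume x: "0 < x" "x < t"
    have "DERIV ?h x :> ((1 - x) * exp x - 1)"
      by (auto intro!: derivative_eq_intros simp: algebra_simps)
    moreover have "(1 - x) * exp x < 1"
    proof -
      have "1 - x < exp (-x)" using exp_minus_greater[of x] x by simp
      then have "(1 - x) * exp x < exp (-x) * exp x" by (intro mult_strict_right_mono) auto
      also have "exp (-x) * exp x = 1" by (simp add: exp_add[symmetric])
      finally show ?thesis .
    qed
    ultimately show "\<exists>y. DERIV ?h x :> y \<and> y < 0" by (intro exI[of _ "(1 - x) * exp x - 1"]) simp
  next
    show "continuous_on {0..t} ?h" by (intro continuous_intros)
  qed
  then show ?thesis by simp
qed

lemma f_bounds:
  fixes t :: real assumes t: "t > 0"
  shows "0 < f_fun t" "f_fun t < 1/2"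
proof -
  have e: "exp t - 1 > t" using exp_strict[of t] t by simp
  then have ep: "exp t - 1 > 0" using t by simp
  have "1 / (exp t - 1) < 1 / t" using e t by (simp add: frac_less2)
  then show "f_fun t < 1/2" unfolding f_fun_def by simp
  have h: "(2 - t) * exp t - 2 - t < 0" using h_neg[OF t] .
  have "f_fun t * (2 * t * (exp t - 1)) = t + 2 - (2 - t) * exp t"
    unfolding f_fun_def using t ep by (simp add: field_simps)
  then have "f_fun t * (2 * t * (exp t - 1)) > 0" using h by simp
  moreover have "2 * t * (exp t - 1) > 0" using t ep by simp
  ultimately show "0 < f_fun t" by (simp add: zero_less_mult_iff)
qed

lemma floor_shift:
  fixes y g :: real assumes "0 \<le> g" "g < 1"
  shows "\<lfloor>y + g\<rfloor> \<noteq> \<lfloor>y\<rfloor> \<longleftrightarrow> frac y \<ge> 1 - g"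
proof -
  have fy: "y = of_int \<lfloor>y\<rfloor> + frac y" "0 \<le> frac y" "frac y < 1" by (auto simp: frac_def intro: frac_lt_1[unfolded frac_def])
  show ?thesis
  proof
    assume "\<lfloor>y + g\<rfloor> \<noteq> \<lfloor>y\<rfloor>"
    moreover have "\<lfloor>y + g\<rfloor> \<ge> \<lfloor>y\<rfloor>" using assms by (simp add: floor_mono)
    ultimately have "\<lfloor>y + g\<rfloor> \<ge> \<lfloor>y\<rfloor> + 1" by simp
    then have "y + g \<ge> of_int \<lfloor>y\<rfloor> + 1" by linarith
    then show "frac y \<ge> 1 - g" using fy by linarith
  next
    assume "frac y \<ge> 1 - g"
    then have "y + g \<ge> of_int (\<lfloor>y\<rfloor> + 1)" using fy by simp
    then have "\<lfloor>y + g\<rfloor> \<ge> \<lfloor>y\<rfloor> + 1" by (simp add: le_floor_iff)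
    then show "\<lfloor>y + g\<rfloor> \<noteq> \<lfloor>y\<rfloor>" by simp
  qed
qed

lemma frac_cases:
  fixes x g :: real assumes "0 < g" "g < 1/2"
  shows "frac (x - 1/2) \<ge> 1 - g \<longleftrightarrow> (frac (2 * x) \<ge> 1 - 2 * g \<and> frac x < 1 - g)"
proof -
  define k where "k = \<lfloor>x\<rfloor>"
  define u where "u = frac x"
  have x: "x = of_int k + u" "0 \<le> u" "u < 1" by (auto simp: k_def u_def frac_def intro: frac_lt_1[unfolded frac_def])
  show ?thesis
  proof (cases "u < 1/2")
    case True
    have a: "frac (x - 1/2) = u + 1/2"
    proof -
      have "\<lfloor>x - 1/2\<rfloor> = k - 1" using x True by (intro floor_unique) auto
      then show ?thesis using x by (simp add: frac_def)
    qed
    have b: "frac (2 * x) = 2 * u"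
    proof -
      have "\<lfloor>2 * x\<rfloor> = 2 * k" using x True by (intro floor_unique) auto
      then show ?thesis using x by (simp add: frac_def)
    qed
    show ?thesis using a b True assms by (auto simp: u_def[symmetric])
  next
    case False
    have a: "frac (x - 1/2) = u - 1/2"
    proof -
      have "\<lfloor>x - 1/2\<rfloor> = k" using x False by (intro floor_unique) auto
      then show ?thesis using x by (simp add: frac_def)
    qed
    have b: "frac (2 * x) = 2 * u - 1"
    proof -
      have "\<lfloor>2 * x\<rfloor> = 2 * k + 1" using x False by (intro floor_unique) auto
      then show ?thesis using x by (simp add: frac_def)
    qed
    show ?thesis using a b False assms x by (auto simp: u_def[symmetric])
  qed
qed

theorem mainTheorem11:
  fixes \<theta> :: real and n :: nat
  assumes "\<theta> > 1" and "n \<ge> 1"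
  shows "n \<in> A_set \<theta> \<longleftrightarrow>
    (frac (2 * real n / ln \<theta>) \<ge> 1 - 2 * f_fun (ln \<theta> / real n) \<and>
     frac (real n / ln \<theta>) < 1 - f_fun (ln \<theta> / real n))"
proof -
  define t where "t = ln \<theta> / real n"
  define x where "x = real n / ln \<theta>"
  have lp: "ln \<theta> > 0" using assms by simp
  have np: "real n > 0" using assms by simp
  have tp: "t > 0" using lp np by (simp add: t_def)
  have xt: "x = 1 / t" by (simp add: x_def t_def)
  have pw: "\<theta> powr (1 / real n) = exp t"
    using assms by (simp add: powr_def t_def)
  have ep: "exp t - 1 > 0" using tp by simp
  have key: "1 / (\<theta> powr (1 / real n) - 1) = (x - 1/2) + f_fun t"
    unfolding pw f_fun_def xt by simp
  have fb: "0 < f_fun t" "f_fun t < 1/2" using f_bounds[OF tp] by auto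
  have "n \<in> A_set \<theta> \<longleftrightarrow> \<lfloor>(x - 1/2) + f_fun t\<rfloor> \<noteq> \<lfloor>x - 1/2\<rfloor>"
    using assms key unfolding A_set_def Mprime_def by (simp add: x_def)
  also have "\<dots> \<longleftrightarrow> frac (x - 1/2) \<ge> 1 - f_fun t"
    using fb by (intro floor_shift) auto
  also have "\<dots> \<longleftrightarrow> (frac (2 * x) \<ge> 1 - 2 * f_fun t \<and> frac x < 1 - f_fun t)"
    using fb by (intro frac_cases) auto
  finally show ?thesis by (simp add: x_def t_def)
qed

end
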